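(* Consider the reduced maps of the Bowtie network described in the context, with $\delta<0$, $\tilde\delta<0$ and $e_{23}>e_{24}$. Then there exist points $(x_3,x_4,x_5)\in(0,1)^3$ with $x_4>x_3^{e_{24}/e_{23}}$ (i.e.\ not in $\tilde{\mathcal{E}}_1$) such that $g_{RL}(x_3,x_4,x_5)\notin\mathcal{E}_1$, and there also exist points $(x_3,x_4,x_5)\in(0,1)^3$ with $x_4>x_3^{e_{24}/e_{23}}$ such that $g_{RL}(x_3,x_4,x_5)\in\mathcal{E}_1$. (That is, both transitions $RLR$ and $RLL$ occur.)
   Context: Setting (Bowtie network). A $\mathbb{Z}_2^5$-equivariant vector field on $\mathbb{R}^5$ has equilibria $\xi_j$ on the $x_j$-axes and two heteroclinic cycles $R=[\xi_1\to\xi_2\to\xi_3\to\xi_1]$ and $L=[\xi_2\to\xi_4\to\xi_5\to\xi_2]$, each connection $[\xi_i\to\xi_j]$ lying in the $x_ix_j$-plane. All eigenvalues are real: at $\xi_j$, $-c_{jk}<0$ is the contracting and $e_{jk}>0$ the expanding eigenvalue in the $x_k$-direction (positive numbers $e_{12},c_{13},c_{14},c_{15}$; $c_{21},c_{25},e_{23},e_{24}$; $e_{31},c_{32},c_{34},c_{35}$; $e_{45},c_{41},c_{42},c_{43}$; $e_{52},c_{51},c_{53},c_{54}$ at $\xi_1,\dots,\xi_5$ respectively). Global maps are the identity and local maps are given by the linearized flow. Define $\rho=\frac{c_{42}c_{54}c_{25}}{e_{24}e_{45}e_{52}}$, $\tilde\rho=\frac{c_{32}c_{13}c_{21}}{e_{23}e_{31}e_{12}}$,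 $\nu=-\frac{e_{23}}{e_{24}}+\frac{c_{25}c_{43}}{e_{24}e_{45}}+\frac{c_{53}c_{42}c_{25}}{e_{45}e_{24}e_{52}}$, $\mu=\frac{c_{21}}{e_{24}}+\frac{c_{25}c_{41}}{e_{24}e_{45}}+\frac{c_{51}c_{42}c_{25}}{e_{45}e_{24}e_{52}}$, $\delta=\frac{c_{43}}{e_{45}}+\frac{c_{53}c_{42}}{e_{52}e_{45}}-\frac{e_{23}c_{54}c_{42}}{e_{52}e_{45}e_{24}}$, $\tilde\delta=\frac{c_{34}}{e_{31}}+\frac{c_{14}c_{32}}{e_{12}e_{31}}-\frac{e_{24}c_{13}c_{32}}{e_{12}e_{31}e_{23}}$, $\alpha=\frac{c_{41}}{e_{45}}+\frac{c_{42}c_{51}}{e_{45}e_{52}}$, $\beta=\frac{c_{43}}{e_{45}}+\frac{c_{42}c_{53}}{e_{45}e_{52}}$. Reduced coordinates: $(x_3,x_4,x_5)$ on the cross section $H_1^{\mathrm{out},2}$ near the $R$-cycle and $(x_1,x_3,x_4)$ on $H_5^{\mathrm{out},2}$ near the $L$-cycle. $\tilde{\mathcal{E}}_1=\{(x_3,x_4,x_5):0<x_3<1,x_4>0,x_5>0,x_4<x_3^{e_{24}/e_{23}}\}$ is the set of points of $H_1^{\mathrm{out},2}$ that take a turn around the $R$-cycle (after $\xi_2$ they go to $\xi_3$); points with $x_4>x_3^{e_{24}/e_{23}}$ go from $\xi_2$ to $\xi_4$. $\mathcal{E}_1=\{(x_1,x_3,x_4):x_1>0,x_3>0,0<x_4<1,x_4>x_3^{e_{24}/e_{23}}\}$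 is the set of points of $H_5^{\mathrm{out},2}$ that take a turn around the $L$-cycle (after $\xi_2$ they go to $\xi_4$ and then $\xi_5$); its complement consists of points going from $\xi_2$ to $\xi_3$, i.e.\ back to the $R$-cycle. The transition map from $H_1^{\mathrm{out},2}$ via $\xi_2,\xi_4,\xi_5$ to $H_5^{\mathrm{out},2}$, defined for $x_4>x_3^{e_{24}/e_{23}}$, is $g_{RL}(x_3,x_4,x_5)=\big(x_4^{\mu}x_5^{\alpha},\ x_3x_4^{\nu}x_5^{\beta},\ x_4^{\rho}x_5^{\frac{e_{24}}{c_{25}}\rho}\big)$. *)

theory Defs
  imports Complex_Main
begin

text \<open>Eigenvalue data of the Bowtie network (all positive reals).
  Field names follow the paper: e_ij expanding, c_ij contracting eigenvalue at xi_i in x_j direction.\<close>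
record bowtie =
  e12 :: real  c13 :: real  c14 :: real  c15 :: real
  c21 :: real  c25 :: real  e23 :: real  e24 :: real
  e31 :: real  c32 :: real  c34 :: real  c35 :: real
  e45 :: real  c41 :: real  c42 :: real  c43 :: real
  e52 :: real  c51 :: real  c53 :: real  c54 :: real

definition bowtie_pos :: "bowtie \<Rightarrow> bool" where
  "bowtie_pos B \<longleftrightarrow>
     0 < e12 B \<and> 0 < c13 B \<and> 0 < c14 B \<and> 0 < c15 B \<and>
     0 < c21 B \<and> 0 < c25 B \<and> 0 < e23 B \<and> 0 < e24 B \<and>
     0 < e31 B \<and> 0 < c32 B \<and> 0 < c34 B \<and> 0 < c35 B \<and>
     0 < e45 B \<and> 0 < c41 B \<and> 0 < c42 B \<and> 0 < c43 B \<and>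
     0 < e52 B \<and> 0 < c51 B \<and> 0 < c53 B \<and> 0 < c54 B"

definition rho :: "bowtie \<Rightarrow> real" where
  "rho B = c42 B * c54 B * c25 B / (e24 B * e45 B * e52 B)"

definition rho_t :: "bowtie \<Rightarrow> real" where
  "rho_t B = c32 B * c13 B * c21 B / (e23 B * e31 B * e12 B)"

definition nu :: "bowtie \<Rightarrow> real" where
  "nu B = - e23 B / e24 B + c25 B * c43 B / (e24 B * e45 B)
          + c53 B * c42 B * c25 B / (e45 B * e24 B * e52 B)"

definition mu :: "bowtie \<Rightarrow> real" where
  "mu B = c21 B / e24 B + c25 B * c41 B / (e24 B * e45 B)
          + c51 B * c42 B * c25 B / (e45 B * e24 B * e52 B)"

definition delta :: "bowtie \<Rightarrow> real" where
  "delta B = c43 B / e45 B + c53 B * c42 B / (e52 B * e45 B)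
             - e23 B * c54 B * c42 B / (e52 B * e45 B * e24 B)"

definition delta_t :: "bowtie \<Rightarrow> real" where
  "delta_t B = c34 B / e31 B + c14 B * c32 B / (e12 B * e31 B)
               - e24 B * c13 B * c32 B / (e12 B * e31 B * e23 B)"

definition alpha :: "bowtie \<Rightarrow> real" where
  "alpha B = c41 B / e45 B + c42 B * c51 B / (e45 B * e52 B)"

definition beta :: "bowtie \<Rightarrow> real" where
  "beta B = c43 B / e45 B + c42 B * c53 B / (e45 B * e52 B)"

text \<open>Transition map g_RL : H_1^{out,2} (coords x3,x4,x5) \<rightarrow> H_5^{out,2} (coords x1,x3,x4).\<close>
definition g_RL :: "bowtie \<Rightarrow> real \<times> real \<times> real \<Rightarrow> real \<times> real \<times> real" where
  "g_RL B = (\<lambda>(x3, x4, x5).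
     (x4 powr mu B * x5 powr alpha B,
      x3 * x4 powr nu B * x5 powr beta B,
      x4 powr rho B * x5 powr (e24 B / c25 B * rho B)))"

definition E1_t :: "bowtie \<Rightarrow> (real \<times> real \<times> real) set" where
  "E1_t B = {(x3, x4, x5). 0 < x3 \<and> x3 < 1 \<and> 0 < x4 \<and> 0 < x5 \<and>
                            x4 < x3 powr (e24 B / e23 B)}"

definition E1 :: "bowtie \<Rightarrow> (real \<times> real \<times> real) set" where
  "E1 B = {(x1, x3, x4). 0 < x1 \<and> 0 < x3 \<and> 0 < x4 \<and> x4 < 1 \<and>
                          x3 powr (e24 B / e23 B) < x4}"

end

theory Submission
  imports Defs
begin

lemma g_exp:
  "g_RL B (exp a, exp b, exp c) =
    (exp (mu B * b + alpha B * c), exp (a + nu B * b + beta B * c),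
     exp (rho B * b + (e24 B / c25 B * rho B) * c))"
  unfolding g_RL_def by (simp add: powr_def exp_add[symmetric] algebra_simps)

lemma E1_exp:
  assumes "rho B * b + (e24 B / c25 B * rho B) * c < 0"
  shows "g_RL B (exp a, exp b, exp c) \<in> E1 B \<longleftrightarrow>
    (e24 B / e23 B) * (a + nu B * b + beta B * c) < rho B * b + (e24 B / c25 B * rho B) * c"
  using assms unfolding g_exp E1_def by (simp add: powr_def mult.commute)

theorem proposition4p5:
  fixes B :: bowtie
  assumes "bowtie_pos B"
    and "delta B < 0" and "delta_t B < 0" and "e23 B > e24 B"
  shows "(\<exists>x3 x4 x5. x3 \<in> {0<..<1} \<and> x4 \<in> {0<..<1} \<and> x5 \<in> {0<..<1} \<and>
            x4 > x3 powr (e24 B / e23 B) \<and> g_RL B (x3, x4, x5) \<notin> E1 B)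
       \<and> (\<exists>x3 x4 x5. x3 \<in> {0<..<1} \<and> x4 \<in> {0<..<1} \<and> x5 \<in> {0<..<1} \<and>
            x4 > x3 powr (e24 B / e23 B) \<and> g_RL B (x3, x4, x5) \<in> E1 B)"
proof -
  have P: "0 < e12 B \<and> 0 < c13 B \<and> 0 < c14 B \<and> 0 < c15 B \<and>
     0 < c21 B \<and> 0 < c25 B \<and> 0 < e23 B \<and> 0 < e24 B \<and>
     0 < e31 B \<and> 0 < c32 B \<and> 0 < c34 B \<and> 0 < c35 B \<and>
     0 < e45 B \<and> 0 < c41 B \<and> 0 < c42 B \<and> 0 < c43 B \<and>
     0 < e52 B \<and> 0 < c51 B \<and> 0 < c53 B \<and> 0 < c54 B"
    using assms(1) unfolding bowtie_pos_def by simp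
  define r where "r = e24 B / e23 B"
  define A where "A = -1 + (c25 B / e23 B) * delta B"
  define D where "D = r * delta B"
  define k where "k = e24 B / c25 B * rho B"
  have r0: "0 < r" using P r_def by simp
  have rho0: "0 < rho B" using P unfolding rho_def by simp
  have k0: "0 < k" using P rho0 unfolding k_def by simp
  have A0: "A < -1" using P assms(2) unfolding A_def by (simp add: mult_pos_neg divide_neg_pos)
  have D0: "D < 0" using r0 assms(2) unfolding D_def by (simp add: mult_pos_neg)
  have key: "r * (a + nu B * b + beta B * c) - (rho B * b + k * c) = r * a + A * b + D * c"
    for a b c
    unfolding r_def A_def D_def k_def nu_def beta_def rho_def delta_def
    using P by (simp add: field_simps)
  have crit: "g_RL B (exp a, exp b, exp c) \<in> E1 B \<longleftrightarrow> r * a + A * b + D * c < 0"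
    if "b < 0" "c < 0" for a b c
  proof -
    have "rho B * b + k * c < 0" using that rho0 k0
      by (simp add: add_neg_neg mult_pos_neg)
    then have "g_RL B (exp a, exp b, exp c) \<in> E1 B \<longleftrightarrow>
      r * (a + nu B * b + beta B * c) < rho B * b + k * c"
      using E1_exp[of B b c a] unfolding r_def k_def by simp
    then show ?thesis using key[of a b c] by linarith
  qed
  have pw: "exp a powr r = exp (r * a)" for a by (simp add: powr_def mult.commute)
  show ?thesis
  proof
    define b where "b = - r / 2"
    define c where "c = r / D"
    have b0: "b < 0" using r0 b_def by simp
    have c0: "c < 0" using r0 D0 c_def by (simp add: divide_pos_neg)
    have "r * (-1) + A * b + D * c = - A * r / 2" using D0 unfolding b_def c_def by simp
    also have "\<dots> > 0" using A0 r0 by (simp add: mult_neg_pos)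
    finally have "\<not> (r * (-1) + A * b + D * c < 0)" by simp
    hence "g_RL B (exp (-1), exp b, exp c) \<notin> E1 B" using crit[OF b0 c0] by simp
    moreover have "exp b > exp (-1) powr (e24 B / e23 B)"
      using pw r0 unfolding b_def r_def[symmetric] by simp
    ultimately show "\<exists>x3 x4 x5. x3 \<in> {0<..<1} \<and> x4 \<in> {0<..<1} \<and> x5 \<in> {0<..<1} \<and>
            x4 > x3 powr (e24 B / e23 B) \<and> g_RL B (x3, x4, x5) \<notin> E1 B"
      using b0 c0 by (intro exI[of _ "exp (-1)"] exI[of _ "exp b"] exI[of _ "exp c"]) simp
  next
    define e where "e = r / (2 * (1 - A - D))"
    have den: "1 - A - D > 1" using A0 D0 by simp
    have e0: "0 < e" using r0 den e_def by simp
    have er: "e < r"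
    proof -
      have "(A+D)*(r*2) < 0" using r0 A0 D0 by (simp add: mult_neg_pos)
      thus ?thesis using r0 den unfolding e_def by (simp add: field_simps)
    qed
    have "(- A - D) * e < r"
    proof -
      have "(- A - D) * e < (1 - A - D) * e" using e0 by simp
      also have "\<dots> = r / 2" using den unfolding e_def by (simp add: field_simps)
      finally show ?thesis using r0 by simp
    qed
    hence "r * (-1) + A * (-e) + D * (-e) < 0" by (simp add: algebra_simps)
    hence "g_RL B (exp (-1), exp (-e), exp (-e)) \<in> E1 B" using crit[of "-e" "-e" "-1"] e0 by simp
    moreover have "exp (-e) > exp (-1) powr (e24 B / e23 B)"
      using pw er unfolding r_def[symmetric] by simp
    ultimately show "\<exists>x3 x4 x5. x3 \<in> {0<..<1} \<and> x4 \<in> {0<..<1} \<and> x5 \<in> {0<..<1} \<and>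
            x4 > x3 powr (e24 B / e23 B) \<and> g_RL B (x3, x4, x5) \<in> E1 B"
      using e0 by (intro exI[of _ "exp (-1)"] exI[of _ "exp (-e)"] exI[of _ "exp (-e)"]) simp
  qed
qed

end
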